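(* Let $\boldsymbol{f}\in\mathbb{R}^E$ route the demand $\boldsymbol{d}$ ($\mathbf{B}^\top\boldsymbol{f}=\boldsymbol{d}$) with $\boldsymbol{u}^-_e<\boldsymbol{f}_e<\boldsymbol{u}^+_e$ for all $e$ and $\boldsymbol{c}^\top\boldsymbol{f}>F^*$. Let $\tilde{\boldsymbol{g}}\in\mathbb{R}^E$ satisfy $\|\mathbf{L}(\boldsymbol{f})^{-1}(\tilde{\boldsymbol{g}}-\boldsymbol{g}(\boldsymbol{f}))\|_\infty\le\varepsilon$ for some $\varepsilon<\alpha/2$, and $\tilde{\boldsymbol{\ell}}\in\mathbb{R}^E_{>0}$ satisfy $\tilde{\boldsymbol{\ell}}\approx_2\boldsymbol{\ell}(\boldsymbol{f})$. If $\Phi(\boldsymbol{f})\le200m\log(mU)$ and $\log(\boldsymbol{c}^\top\boldsymbol{f}-F^* )\ge-10\log(mU)$, then $\frac{\tilde{\boldsymbol{g}}^\top(\boldsymbol{f}^*-\boldsymbol{f})}{100m+\|\tilde{\mathbf{L}}(\boldsymbol{f}^*-\boldsymbol{f})\|_1}\le-\alpha/4$, where $\boldsymbol{f}^*$ is an optimal (min-cost) flow.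
   Context: Setting: $G=(V,E)$ is a directed graph with $m=|E|$ edges and edge-vertex incidence matrix $\mathbf{B}$ (row of edge $(a,b)$ has $+1$ at $a$, $-1$ at $b$); demands $\boldsymbol{d}\in\mathbb{Z}^V$, lower/upper capacities $\boldsymbol{u}^-,\boldsymbol{u}^+\in\mathbb{Z}^E$, and costs $\boldsymbol{c}\in\mathbb{Z}^E$ are integers bounded in absolute value by $U$. $\boldsymbol{f}^*\in\arg\min\{\boldsymbol{c}^\top\boldsymbol{f}:\mathbf{B}^\top\boldsymbol{f}=\boldsymbol{d},\ \boldsymbol{u}^-\le\boldsymbol{f}\le\boldsymbol{u}^+\}$ and $F^*=\boldsymbol{c}^\top\boldsymbol{f}^*$. Let $\alpha=1/(1000\log(mU))$ and $\Phi(\boldsymbol{f})=20m\log(\boldsymbol{c}^\top\boldsymbol{f}-F^* )+\sum_{e}\big((\boldsymbol{u}^+_e-\boldsymbol{f}_e)^{-\alpha}+(\boldsymbol{f}_e-\boldsymbol{u}^-_e)^{-\alpha}\big)$. Lengths $\boldsymbol{\ell}(\boldsymbol{f})_e=(\boldsymbol{u}^+_e-\boldsymbol{f}_e)^{-1-\alpha}+(\boldsymbol{f}_e-\boldsymbol{u}^-_e)^{-1-\alpha}$; gradients $\boldsymbol{g}(\boldsymbol{f})=\nabla\Phi(\boldsymbol{f})$, i.e. $\boldsymbol{g}(\boldsymbol{f})_e=20m(\boldsymbol{c}^\top\boldsymbol{f}-F^* )^{-1}\boldsymbol{c}_e+\alpha(\boldsymbol{u}^+_e-\boldsymbol{f}_e)^{-1-\alpha}-\alpha(\boldsymbol{f}_e-\boldsymbol{u}^-_e)^{-1-\alpha}$.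 $\mathbf{L}(\boldsymbol{f})=\mathrm{diag}(\boldsymbol{\ell}(\boldsymbol{f}))$, $\tilde{\mathbf{L}}=\mathrm{diag}(\tilde{\boldsymbol{\ell}})$. $\boldsymbol{x}\approx_\beta\boldsymbol{y}$ means $\beta^{-1}\boldsymbol{y}_i\le\boldsymbol{x}_i\le\beta\boldsymbol{y}_i$ for all $i$. *)

theory Defs
  imports Complex_Main "HOL-Library.Cardinality"
begin

definition incidence :: "('e \<Rightarrow> 'v) \<Rightarrow> ('e \<Rightarrow> 'v) \<Rightarrow> 'e \<Rightarrow> 'v \<Rightarrow> real" where
  "incidence tail head e v = (if v = tail e then 1 else 0) - (if v = head e then 1 else 0)"

definition routes :: "('e::finite \<Rightarrow> 'v) \<Rightarrow> ('e \<Rightarrow> 'v) \<Rightarrow> ('v \<Rightarrow> int) \<Rightarrow> ('e \<Rightarrow> real) \<Rightarrow> bool" where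
  "routes tail head d f \<longleftrightarrow> (\<forall>v. (\<Sum>e\<in>UNIV. incidence tail head e v * f e) = real_of_int (d v))"

definition feasible_flow :: "('e::finite \<Rightarrow> 'v) \<Rightarrow> ('e \<Rightarrow> 'v) \<Rightarrow> ('v \<Rightarrow> int) \<Rightarrow> ('e \<Rightarrow> int) \<Rightarrow> ('e \<Rightarrow> int) \<Rightarrow> ('e \<Rightarrow> real) \<Rightarrow> bool" where
  "feasible_flow tail head d ulo uhi f \<longleftrightarrow> routes tail head d f \<and> (\<forall>e. real_of_int (ulo e) \<le> f e \<and> f e \<le> real_of_int (uhi e))"

definition cost :: "('e::finite \<Rightarrow> int) \<Rightarrow> ('e \<Rightarrow> real) \<Rightarrow> real" where
  "cost c f = (\<Sum>e\<in>UNIV. real_of_int (c e) * f e)"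

definition is_min_cost_flow :: "('e::finite \<Rightarrow> 'v) \<Rightarrow> ('e \<Rightarrow> 'v) \<Rightarrow> ('v \<Rightarrow> int) \<Rightarrow> ('e \<Rightarrow> int) \<Rightarrow> ('e \<Rightarrow> int) \<Rightarrow> ('e \<Rightarrow> int) \<Rightarrow> ('e \<Rightarrow> real) \<Rightarrow> bool" where
  "is_min_cost_flow tail head d ulo uhi c fs \<longleftrightarrow> feasible_flow tail head d ulo uhi fs \<and>
     (\<forall>f. feasible_flow tail head d ulo uhi f \<longrightarrow> cost c fs \<le> cost c f)"

text \<open>alpha = 1/(1000 log(mU)), log = natural logarithm\<close>
definition alpha :: "nat \<Rightarrow> real \<Rightarrow> real" where
  "alpha m U = 1 / (1000 * ln (real m * U))"

definition Phi :: "real \<Rightarrow> ('e::finite \<Rightarrow> int) \<Rightarrow> ('e \<Rightarrow> int) \<Rightarrow> ('e \<Rightarrow> int) \<Rightarrow> real \<Rightarrow> ('e \<Rightarrow> real) \<Rightarrow> real" where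
  "Phi a ulo uhi c Fs f = 20 * real CARD('e) * ln (cost c f - Fs) +
     (\<Sum>e\<in>UNIV. (real_of_int (uhi e) - f e) powr (-a) + (f e - real_of_int (ulo e)) powr (-a))"

definition lengths :: "real \<Rightarrow> ('e \<Rightarrow> int) \<Rightarrow> ('e \<Rightarrow> int) \<Rightarrow> ('e \<Rightarrow> real) \<Rightarrow> 'e \<Rightarrow> real" where
  "lengths a ulo uhi f e = (real_of_int (uhi e) - f e) powr (-1 - a) + (f e - real_of_int (ulo e)) powr (-1 - a)"

definition grad :: "real \<Rightarrow> ('e::finite \<Rightarrow> int) \<Rightarrow> ('e \<Rightarrow> int) \<Rightarrow> ('e \<Rightarrow> int) \<Rightarrow> real \<Rightarrow> ('e \<Rightarrow> real) \<Rightarrow> 'e \<Rightarrow> real" where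
  "grad a ulo uhi c Fs f e = 20 * real CARD('e) / (cost c f - Fs) * real_of_int (c e)
     + a * (real_of_int (uhi e) - f e) powr (-1 - a) - a * (f e - real_of_int (ulo e)) powr (-1 - a)"

definition approx_within :: "real \<Rightarrow> ('e \<Rightarrow> real) \<Rightarrow> ('e \<Rightarrow> real) \<Rightarrow> bool" where
  "approx_within \<beta> x y \<longleftrightarrow> (\<forall>i. y i / \<beta> \<le> x i \<and> x i \<le> \<beta> * y i)"

end

theory Submission
  imports Defs
begin

lemma lin_fin:
  fixes al X Y Z :: real
  shows "al * (X + Y) \<le> al * Z \<Longrightarrow> al * X \<le> al * Z - al * Y"
  by (simp add: distrib_left)

lemma edge_bound:
  fixes a b D al :: real
  assumes a: "a > 0" and b: "b > 0" and D1: "-b \<le> D" and D2: "D \<le> a" and al: "al > 0"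
  shows "(al * a powr (-1 - al) - al * b powr (-1 - al)) * D
     \<le> 2 * al * (a powr (-al) + b powr (-al)) - al * ((a powr (-1 - al) + b powr (-1 - al)) * \<bar>D\<bar>)"
proof -
  let ?A = "a powr (-1 - al)" and ?B = "b powr (-1 - al)"
  have Aa: "?A * a = a powr (-al)"
  proof -
    have "a powr 1 = a" using a by simp
    hence "?A * a = ?A * a powr 1" by simp
    also have "\<dots> = a powr ((-1 - al) + 1)" by (rule powr_add[symmetric])
    also have "\<dots> = a powr (-al)" by simp
    finally show ?thesis .
  qed
  have Bb: "?B * b = b powr (-al)"
  proof -
    have "b powr 1 = b" using b by simp
    hence "?B * b = ?B * b powr 1" by simp
    also have "\<dots> = b powr ((-1 - al) + 1)" by (rule powr_add[symmetric])
    also have "\<dots> = b powr (-al)" by simp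
    finally show ?thesis .
  qed
  have A0: "?A \<ge> 0" "?B \<ge> 0" "a powr (-al) \<ge> 0" "b powr (-al) \<ge> 0" by auto
  have core: "(?A - ?B) * D + (?A + ?B) * \<bar>D\<bar> \<le> 2 * (a powr (-al) + b powr (-al))"
  proof (cases "D \<ge> 0")
    case True
    hence absD: "\<bar>D\<bar> = D" by (rule abs_of_nonneg)
    have "?A * D \<le> ?A * a" by (rule mult_left_mono) (use D2 A0 in auto)
    have "(?A - ?B) * D + (?A + ?B) * \<bar>D\<bar> = 2 * (?A * D)" unfolding absD by (simp add: algebra_simps)
    also have "\<dots> \<le> 2 * (?A * a)" by (rule mult_left_mono[OF \<open>?A * D \<le> ?A * a\<close>]) simp
    also have "\<dots> = 2 * a powr (-al)" using Aa by simp
    also have "\<dots> \<le> 2 * (a powr (-al) + b powr (-al))" using A0 by simp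
    finally show ?thesis .
  next
    case False
    hence absD: "\<bar>D\<bar> = - D" by simp
    have "?B * (-D) \<le> ?B * b" by (rule mult_left_mono) (use D1 A0 in auto)
    have "(?A - ?B) * D + (?A + ?B) * \<bar>D\<bar> = 2 * (?B * (-D))" unfolding absD by (simp add: algebra_simps)
    also have "\<dots> \<le> 2 * (?B * b)" by (rule mult_left_mono[OF \<open>?B * (-D) \<le> ?B * b\<close>]) simp
    also have "\<dots> = 2 * b powr (-al)" using Bb by simp
    also have "\<dots> \<le> 2 * (a powr (-al) + b powr (-al))" using A0 by simp
    finally show ?thesis .
  qed
  have "al * ((?A - ?B) * D + (?A + ?B) * \<bar>D\<bar>) \<le> al * (2 * (a powr (-al) + b powr (-al)))"
    by (rule mult_left_mono[OF core]) (use al in simp)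
  hence H: "al * ((?A - ?B) * D) \<le> al * (2 * (a powr (-al) + b powr (-al))) - al * ((?A + ?B) * \<bar>D\<bar>)"
    by (rule lin_fin)
  have e1: "(al * ?A - al * ?B) * D = al * ((?A - ?B) * D)" by (simp add: algebra_simps)
  have e2: "2 * al * (a powr (-al) + b powr (-al)) = al * (2 * (a powr (-al) + b powr (-al)))" by simp
  show ?thesis unfolding e1 e2 by (rule H)
qed

lemma lin_aux:
  fixes N m Z X Y :: real
  assumes "N \<le> - 20 * m + 8/10 * m - Z" "X \<le> 1/2 * m" "Y \<le> 4 * Z" "m \<ge> 0"
  shows "N \<le> - 25 * X - Y / 4"
  using assms by linarith

lemma subst2_aux:
  fixes N N' S S' m a :: real
  shows "N / (100 * m + S) \<le> a \<Longrightarrow> N = N' \<Longrightarrow> S = S' \<Longrightarrow> N' / (100 * m + S') \<le> a"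
  by simp

lemma half_aux:
  fixes x y :: real
  shows "x * y = 2 * (x / 2 * y)"
  by simp

lemma lin2:
  fixes a b c d :: real
  shows "a \<le> b + c \<Longrightarrow> b \<le> d \<Longrightarrow> a \<le> d + c"
  by linarith

lemma lin3:
  fixes N m P Q Z W :: real
  shows "N \<le> - 20 * m + 2 * P - Q + Z \<Longrightarrow> Z \<le> W \<Longrightarrow> P \<le> 4/10 * m \<Longrightarrow> Q = 2 * W
    \<Longrightarrow> N \<le> - 20 * m + 8/10 * m - W"
  by linarith

theorem lemma4p7:
  fixes tail head :: "'e::finite \<Rightarrow> 'v::finite"
    and d :: "'v \<Rightarrow> int" and ulo uhi c :: "'e \<Rightarrow> int" and U :: nat
    and fs f gt lt :: "'e \<Rightarrow> real" and \<epsilon> :: real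
  defines "m \<equiv> CARD('e)"
  defines "\<alpha> \<equiv> alpha m (real U)"
  defines "Fs \<equiv> cost c fs"
  assumes bounds: "\<forall>v. \<bar>d v\<bar> \<le> int U" "\<forall>e. \<bar>ulo e\<bar> \<le> int U" "\<forall>e. \<bar>uhi e\<bar> \<le> int U"
      "\<forall>e. \<bar>c e\<bar> \<le> int U"
    and opt: "is_min_cost_flow tail head d ulo uhi c fs"
    and route: "routes tail head d f"
    and strict: "\<forall>e. real_of_int (ulo e) < f e \<and> f e < real_of_int (uhi e)"
    and gap: "cost c f > Fs"
    and grad_err: "\<forall>e. \<bar>gt e - grad \<alpha> ulo uhi c Fs f e\<bar> / lengths \<alpha> ulo uhi f e \<le> \<epsilon>"
    and eps: "\<epsilon> < \<alpha> / 2"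
    and lt_pos: "\<forall>e. lt e > 0"
    and lt_approx: "approx_within 2 lt (lengths \<alpha> ulo uhi f)"
    and pot: "Phi \<alpha> ulo uhi c Fs f \<le> 200 * real m * ln (real m * real U)"
    and gaplow: "ln (cost c f - Fs) \<ge> -10 * ln (real m * real U)"
  shows "(\<Sum>e\<in>UNIV. gt e * (fs e - f e)) / (100 * real m + (\<Sum>e\<in>UNIV. lt e * \<bar>fs e - f e\<bar>))
           \<le> - \<alpha> / 4"
proof -
  define D where "D e = fs e - f e" for e
  define L where "L e = lengths \<alpha> ulo uhi f e" for e
  define G where "G e = grad \<alpha> ulo uhi c Fs f e" for e
  define a where "a e = real_of_int (uhi e) - f e" for e
  define b where "b e = f e - real_of_int (ulo e)" for e
  define gp where "gp = cost c f - Fs"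
  have gp: "gp > 0" using gap gp_def by simp
  have ab: "a e > 0" "b e > 0" for e using strict a_def b_def by auto
  have m1: "m \<ge> 1" unfolding m_def by (simp add: Suc_le_eq)
  have U1: "U \<ge> 1"
  proof (rule ccontr)
    assume "\<not> U \<ge> 1" hence "U = 0" by simp
    hence "ulo e = 0" "uhi e = 0" for e using bounds(2,3) by auto
    thus False using strict[rule_format, of undefined] by (simp; linarith)
  qed
  have L0: "L e > 0" for e
  proof -
    have "a e powr (-1-\<alpha>) > 0" "b e powr (-1-\<alpha>) > 0" using ab[of e] by auto
    moreover have "L e = a e powr (-1 - \<alpha>) + b e powr (-1 - \<alpha>)"
      unfolding L_def lengths_def a_def b_def by simp
    ultimately show ?thesis by linarith
  qed
  have errb: "\<bar>gt e - G e\<bar> \<le> \<epsilon> * L e" for e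
    using grad_err L0[of e] unfolding G_def L_def by (simp add: divide_le_eq)
  have mU: "real m * real U \<ge> 1"
  proof -
    have "(1::real) * 1 \<le> real m * real U" using m1 U1 by (intro mult_mono) auto
    thus ?thesis by simp
  qed
  have apos: "\<alpha> > 0"
  proof -
    have "\<alpha> \<ge> 0" unfolding \<alpha>_def alpha_def using mU by simp
    moreover have "\<alpha> \<noteq> 0"
    proof
      assume "\<alpha> = 0"
      hence "\<epsilon> < 0" using eps by simp
      moreover have "\<bar>gt e - G e\<bar> \<ge> 0" for e by simp
      have "\<epsilon> * L undefined < 0" using \<open>\<epsilon> < 0\<close> L0[of undefined] by (rule mult_neg_pos)
      thus False using errb[of undefined] by linarith
    qed
    ultimately show ?thesis by simp
  qed
  have lnpos: "ln (real m * real U) > 0" using apos unfolding \<alpha>_def alpha_def by (simp add: zero_less_mult_iff)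
  have aln: "\<alpha> * ln (real m * real U) = 1/1000" unfolding \<alpha>_def alpha_def using lnpos by simp
  have "real m * real U \<noteq> 1" using lnpos by auto
  hence mU2: "real m * real U > 1" using mU by linarith
  have "ln (real m * real U) \<ge> ln 2"
  proof -
    have "real m * real U \<ge> 2"
    proof -
      have "real (m * U) > 1" using mU2 by simp
      hence "m * U > 1" by linarith
      hence "m * U \<ge> 2" by simp
      hence "real (m * U) \<ge> 2" by linarith
      thus ?thesis by simp
    qed
    thus ?thesis by simp
  qed
  moreover have "ln (2::real) \<ge> 1/2"
  proof -
    have "ln (1/2::real) \<le> 1/2 - 1" by (rule ln_le_minus_one) simp
    moreover have "ln (1/2::real) = - ln 2" by (simp add: ln_div)
    ultimately show ?thesis by simp
  qed
  ultimately have "1000 * ln (real m * real U) \<ge> 2" by linarith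
  hence asmall: "\<alpha> \<le> 1/2" unfolding \<alpha>_def alpha_def by (simp add: divide_le_eq)
  have feas: "feasible_flow tail head d ulo uhi fs" using opt unfolding is_min_cost_flow_def by simp
  have Db: "- b e \<le> D e" "D e \<le> a e" for e using feas unfolding feasible_flow_def D_def a_def b_def by auto
  define S where "S = (\<Sum>e\<in>UNIV. a e powr (-\<alpha>) + b e powr (-\<alpha>))"
  have PhiS: "Phi \<alpha> ulo uhi c Fs f = 20 * real m * ln gp + S"
    unfolding Phi_def S_def a_def b_def gp_def m_def by simp
  have Sb: "S \<le> 400 * real m * ln (real m * real U)"
  proof -
    have "20 * real m * (-10 * ln (real m * real U)) \<le> 20 * real m * ln gp"
      using gaplow gp_def by (intro mult_left_mono) auto
    thus ?thesis using PhiS pot by simp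
  qed
  have aS: "\<alpha> * S \<le> 4/10 * real m"
  proof -
    have "\<alpha> * S \<le> \<alpha> * (400 * real m * ln (real m * real U))" using Sb apos by (simp add: mult_left_mono)
    also have "\<dots> = 400 * real m * (\<alpha> * ln (real m * real U))" by simp
    finally show ?thesis using aln by simp
  qed
  have Geq: "G e = 20 * real m / gp * real_of_int (c e)
      + (\<alpha> * a e powr (-1 - \<alpha>) - \<alpha> * b e powr (-1 - \<alpha>))" for e
    unfolding G_def grad_def m_def gp_def a_def b_def by (simp only: add_diff_eq)
  have Gsplit: "G e * D e = 20 * real m / gp * (real_of_int (c e) * fs e - real_of_int (c e) * f e)
      + (\<alpha> * a e powr (-1 - \<alpha>) - \<alpha> * b e powr (-1 - \<alpha>)) * D e" for e
  proof -
    have "G e * D e = 20 * real m / gp * (real_of_int (c e) * D e)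
      + (\<alpha> * a e powr (-1 - \<alpha>) - \<alpha> * b e powr (-1 - \<alpha>)) * D e"
      unfolding Geq by (simp only: distrib_right mult.assoc)
    moreover have "real_of_int (c e) * D e = real_of_int (c e) * fs e - real_of_int (c e) * f e"
      unfolding D_def by (rule right_diff_distrib)
    ultimately show ?thesis by simp
  qed
  have first: "(\<Sum>e\<in>UNIV. 20 * real m / gp * (real_of_int (c e) * fs e - real_of_int (c e) * f e)) = - 20 * real m"
  proof -
    have "(\<Sum>e\<in>UNIV. 20 * real m / gp * (real_of_int (c e) * fs e - real_of_int (c e) * f e))
        = 20 * real m / gp * (Fs - cost c f)"
      unfolding Fs_def cost_def by (simp only: sum_subtractf[symmetric] sum_distrib_left)
    also have "\<dots> = 20 * real m / gp * (- gp)" using gp_def by simp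
    also have "\<dots> = - 20 * real m" using gp by simp
    finally show ?thesis .
  qed
  have Lab: "L e = a e powr (-1 - \<alpha>) + b e powr (-1 - \<alpha>)" for e
    unfolding L_def lengths_def a_def b_def by simp
  have eb: "(\<alpha> * a e powr (-1 - \<alpha>) - \<alpha> * b e powr (-1 - \<alpha>)) * D e
     \<le> 2 * \<alpha> * (a e powr (-\<alpha>) + b e powr (-\<alpha>)) - \<alpha> * (L e * \<bar>D e\<bar>)" for e
    unfolding Lab using edge_bound[OF ab(1)[of e] ab(2)[of e] Db(1)[of e] Db(2)[of e] apos] .
  have second: "(\<Sum>e\<in>UNIV. (\<alpha> * a e powr (-1 - \<alpha>) - \<alpha> * b e powr (-1 - \<alpha>)) * D e)
      \<le> 2 * \<alpha> * S - \<alpha> * (\<Sum>e\<in>UNIV. L e * \<bar>D e\<bar>)"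
  proof -
    have "(\<Sum>e\<in>UNIV. (\<alpha> * a e powr (-1 - \<alpha>) - \<alpha> * b e powr (-1 - \<alpha>)) * D e)
       \<le> (\<Sum>e\<in>UNIV. 2 * \<alpha> * (a e powr (-\<alpha>) + b e powr (-\<alpha>)) - \<alpha> * (L e * \<bar>D e\<bar>))"
      by (rule sum_mono) (rule eb)
    also have "\<dots> = 2 * \<alpha> * S - \<alpha> * (\<Sum>e\<in>UNIV. L e * \<bar>D e\<bar>)"
      unfolding S_def by (simp add: sum_subtractf sum_distrib_left)
    finally show ?thesis .
  qed
  have GD: "(\<Sum>e\<in>UNIV. G e * D e) \<le> - 20 * real m + 2 * \<alpha> * S - \<alpha> * (\<Sum>e\<in>UNIV. L e * \<bar>D e\<bar>)"
  proof -
    have "(\<Sum>e\<in>UNIV. G e * D e) = (\<Sum>e\<in>UNIV. 20 * real m / gp * (real_of_int (c e) * fs e - real_of_int (c e) * f e))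
      + (\<Sum>e\<in>UNIV. (\<alpha> * a e powr (-1 - \<alpha>) - \<alpha> * b e powr (-1 - \<alpha>)) * D e)"
      unfolding Gsplit by (rule sum.distrib)
    thus ?thesis using first second by linarith
  qed
  have gtD: "gt e * D e \<le> G e * D e + \<epsilon> * (L e * \<bar>D e\<bar>)" for e
  proof -
    have "(gt e - G e) * D e \<le> \<bar>gt e - G e\<bar> * \<bar>D e\<bar>" by (metis abs_ge_self abs_mult)
    also have "\<dots> \<le> \<epsilon> * L e * \<bar>D e\<bar>" using errb[of e] by (simp add: mult_right_mono)
    finally show ?thesis by (simp add: algebra_simps)
  qed
  have N: "(\<Sum>e\<in>UNIV. gt e * D e) \<le> (\<Sum>e\<in>UNIV. G e * D e) + \<epsilon> * (\<Sum>e\<in>UNIV. L e * \<bar>D e\<bar>)"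
  proof -
    have "(\<Sum>e\<in>UNIV. gt e * D e) \<le> (\<Sum>e\<in>UNIV. G e * D e + \<epsilon> * (L e * \<bar>D e\<bar>))"
      by (rule sum_mono) (rule gtD)
    thus ?thesis by (simp add: sum.distrib sum_distrib_left)
  qed
  define SL where "SL = (\<Sum>e\<in>UNIV. L e * \<bar>D e\<bar>)"
  define SLt where "SLt = (\<Sum>e\<in>UNIV. lt e * \<bar>D e\<bar>)"
  have SL0: "SL \<ge> 0" unfolding SL_def using L0 by (simp add: sum_nonneg less_imp_le)
  have SLt0: "SLt \<ge> 0" unfolding SLt_def using lt_pos by (simp add: sum_nonneg less_imp_le)
  have SLt2: "SLt \<le> 2 * SL"
  proof -
    have "lt e * \<bar>D e\<bar> \<le> 2 * (L e * \<bar>D e\<bar>)" for e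
    proof -
      have "lt e \<le> 2 * L e" using lt_approx unfolding approx_within_def L_def by auto
      hence "lt e * \<bar>D e\<bar> \<le> (2 * L e) * \<bar>D e\<bar>" by (rule mult_right_mono) simp
      thus ?thesis by simp
    qed
    hence "SLt \<le> (\<Sum>e\<in>UNIV. 2 * (L e * \<bar>D e\<bar>))" unfolding SLt_def by (rule sum_mono)
    also have "\<dots> = 2 * SL" unfolding SL_def by (rule sum_distrib_left[symmetric])
    finally show ?thesis .
  qed
  have N': "(\<Sum>e\<in>UNIV. gt e * D e) \<le> (\<Sum>e\<in>UNIV. G e * D e) + \<epsilon> * SL"
    using N unfolding SL_def .
  have GD': "(\<Sum>e\<in>UNIV. G e * D e) \<le> - 20 * real m + 2 * \<alpha> * S - \<alpha> * SL"
    using GD unfolding SL_def .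
  have e2: "2 * \<alpha> * S = 2 * (\<alpha> * S)" by (rule mult.assoc)
  have GD'': "(\<Sum>e\<in>UNIV. G e * D e) \<le> - 20 * real m + 2 * (\<alpha> * S) - \<alpha> * SL"
    using GD' unfolding e2 .
  have Nb: "(\<Sum>e\<in>UNIV. gt e * D e) \<le> - 20 * real m + 2 * (\<alpha> * S) - \<alpha> * SL + \<epsilon> * SL"
    by (rule lin2[OF N' GD''])
  have EW: "\<epsilon> * SL \<le> \<alpha> / 2 * SL" by (rule mult_right_mono[OF _ SL0]) (use eps in linarith)
  have QW: "\<alpha> * SL = 2 * (\<alpha> / 2 * SL)" by (rule half_aux)
  have Nb2: "(\<Sum>e\<in>UNIV. gt e * D e) \<le> - 20 * real m + 8/10 * real m - \<alpha> / 2 * SL"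
    by (rule lin3[OF Nb EW aS QW])
  have rm1: "real m \<ge> 1" using m1 by simp
  have den: "100 * real m + SLt > 0" using rm1 SLt0 by linarith
  have "(\<Sum>e\<in>UNIV. gt e * D e) \<le> - \<alpha> / 4 * (100 * real m + SLt)"
  proof -
    have X: "\<alpha> * real m \<le> 1/2 * real m" using asmall by (intro mult_right_mono) auto
    have "\<alpha> * SLt \<le> \<alpha> * (2 * SL)" using SLt2 apos by (intro mult_left_mono) auto
    also have "\<dots> = 4 * (\<alpha> / 2 * SL)" by simp
    finally have Y: "\<alpha> * SLt \<le> 4 * (\<alpha> / 2 * SL)" .
    have E: "- \<alpha> / 4 * (100 * real m + SLt) = - 25 * (\<alpha> * real m) - (\<alpha> * SLt) / 4"
      by (simp add: algebra_simps)
    show ?thesis unfolding E by (rule lin_aux[OF Nb2 X Y]) simp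

  qed
  hence "(\<Sum>e\<in>UNIV. gt e * D e) / (100 * real m + SLt) \<le> - \<alpha> / 4"
    by (rule iffD2[OF pos_divide_le_eq[OF den]])
  moreover have "(\<Sum>e\<in>UNIV. gt e * D e) = (\<Sum>e\<in>UNIV. gt e * (fs e - f e))"
    by (simp only: D_def)
  moreover have "SLt = (\<Sum>e\<in>UNIV. lt e * \<bar>fs e - f e\<bar>)"
    by (simp only: SLt_def D_def)
  ultimately show ?thesis by (rule subst2_aux)
qed

end
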